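(* Let $X$ be an $n$-dimensional random vector in class $\mathcal{L}_n(K)$. Let $f:\mathbb{R}^n\to\mathbb{R}$ be a continuously differentiable convex function. Take any $a\in\mathbb{R}$ and $b>0$, and let $p:=\mathbb{P}(f(X)\ge a,\ |\nabla f(X)|\le b)$. Then for any $t\ge0$, \[ \mathbb{P}\bigl(f(X)\le a-Kb\sqrt{2\log(2/p)}-t\bigr)\le 2e^{-t^2/2b^2K^2}. \]
   Context: $\mathcal{L}(K)$ is the set of probability measures on $\mathbb{R}$ that are push-forwards of the standard Gaussian measure under a Lipschitz map with Lipschitz constant $\le K$. $\mathcal{L}_n(K)$ is the set of product measures on $\mathbb{R}^n$ all of whose marginals lie in $\mathcal{L}(K)$; a random vector is in class $\mathcal{L}_n(K)$ if its law is in $\mathcal{L}_n(K)$. $|\cdot|$ is the Euclidean norm. *)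

theory Defs
  imports "HOL-Probability.Probability"
begin

definition std_gaussian :: "real measure" where
  "std_gaussian = density lborel std_normal_density"

definition lip_gauss_class :: "real \<Rightarrow> real measure set" where
  "lip_gauss_class K = {distr std_gaussian borel g | g. K-lipschitz_on UNIV g}"

definition lip_gauss_class_n :: "real \<Rightarrow> (real^'n) measure set" where
  "lip_gauss_class_n K =
     {distr (PiM UNIV \<nu>) borel (\<lambda>x. vec_lambda x) | \<nu>. \<forall>i. \<nu> i \<in> lip_gauss_class K}"

end

theory Submission
  imports Defs
begin

lemma emeasure_affine_preimage:
  fixes c t :: real and K :: "real set"
  assumes "c > 0" "K \<in> sets borel"
  shows "emeasure lborel ((\<lambda>x. t + c * x) -` K) = ennreal (1/c) * emeasure lborel K"
proof -
  have "emeasure lborel K = emeasure (density (distr lborel borel (\<lambda>x. t + c * x)) (\<lambda>_. ennreal \<bar>c\<bar>)) K"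
    using lborel_real_affine[of c t] assms by simp
  also have "\<dots> = ennreal c * emeasure lborel ((\<lambda>x. t + c * x) -` K)"
    using assms by (simp add: emeasure_density nn_integral_cmult_indicator emeasure_distr)
  finally have "emeasure lborel K = ennreal c * emeasure lborel ((\<lambda>x. t + c * x) -` K)" .
  then have "ennreal (1/c) * emeasure lborel K = ennreal (1/c) * ennreal c * emeasure lborel ((\<lambda>x. t + c * x) -` K)"
    by (simp add: mult.assoc)
  also have "ennreal (1/c) * ennreal c = 1" using assms by (simp flip: ennreal_mult)
  finally show ?thesis by simp
qed

lemma emeasure_affine_image:
  fixes c d :: real and K :: "real set"
  assumes "c > 0" "K \<in> sets borel"
  shows "emeasure lborel ((\<lambda>x. c * x + d) ` K) = ennreal c * emeasure lborel K"
proof -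
  have "(\<lambda>x. c * x + d) ` K = (\<lambda>y. (-d/c) + (1/c) * y) -` K"
  proof (intro set_eqI iffI)
    fix y assume "y \<in> (\<lambda>x. c * x + d) ` K"
    then obtain x where "x \<in> K" "y = c * x + d" by auto
    then show "y \<in> (\<lambda>y. (-d/c) + (1/c) * y) -` K" using assms by (simp add: field_simps)
  next
    fix y assume "y \<in> (\<lambda>y. (-d/c) + (1/c) * y) -` K"
    then have "(-d/c) + (1/c) * y \<in> K" by simp
    moreover have "y = c * ((-d/c) + (1/c) * y) + d" using assms by (simp add: field_simps)
    ultimately show "y \<in> (\<lambda>x. c * x + d) ` K" by (rule rev_image_eqI)
  qed
  then show ?thesis using emeasure_affine_preimage[of "1/c" K "-d/c"] assms by simp
qed

lemma bm_compact:
  fixes P Q C :: "real set" and \<theta> :: real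
  assumes th: "0 < \<theta>" "\<theta> < 1" and cp: "compact P" "compact Q" and ne: "P \<noteq> {}" "Q \<noteq> {}"
    and C: "C \<in> sets borel" and sub: "\<And>p q. p \<in> P \<Longrightarrow> q \<in> Q \<Longrightarrow> \<theta> * p + (1 - \<theta>) * q \<in> C"
  shows "ennreal \<theta> * emeasure lborel P + ennreal (1 - \<theta>) * emeasure lborel Q \<le> emeasure lborel C"
proof -
  obtain p0 where p0: "p0 \<in> P" "\<And>y. y \<in> P \<Longrightarrow> y \<le> p0"
    using compact_attains_sup[OF cp(1) ne(1)] by blast
  obtain q0 where q0: "q0 \<in> Q" "\<And>y. y \<in> Q \<Longrightarrow> q0 \<le> y"
    using compact_attains_inf[OF cp(2) ne(2)] by blast
  define S1 where "S1 = (\<lambda>p. \<theta> * p + (1 - \<theta>) * q0) ` P"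
  define S2 where "S2 = (\<lambda>q. (1 - \<theta>) * q + \<theta> * p0) ` Q"
  define pt where "pt = \<theta> * p0 + (1 - \<theta>) * q0"
  have cS1: "compact S1" unfolding S1_def
    by (intro compact_continuous_image cp continuous_intros)
  have cS2: "compact S2" unfolding S2_def
    by (intro compact_continuous_image cp continuous_intros)
  have mS1: "S1 \<in> sets borel" using cS1 by (simp add: borel_compact)
  have mS2: "S2 - {pt} \<in> sets borel" using cS2 by (intro sets.Diff borel_compact) auto
  have PB: "P \<in> sets borel" "Q \<in> sets borel" using cp by (simp_all add: borel_compact)
  have e1: "emeasure lborel S1 = ennreal \<theta> * emeasure lborel P"
    unfolding S1_def using emeasure_affine_image[of \<theta> P "(1 - \<theta>) * q0"] th PB by simp
  have e2: "emeasure lborel S2 = ennreal (1 - \<theta>) * emeasure lborel Q"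
    unfolding S2_def using emeasure_affine_image[of "1 - \<theta>" Q "\<theta> * p0"] th PB by simp
  have e2': "emeasure lborel (S2 - {pt}) = emeasure lborel S2"
    using cS2 by (intro emeasure_Diff_null_set) (auto simp: borel_compact)
  have eqpt: "z = pt" if z1: "z \<in> S1" and z2: "z \<in> S2" for z
  proof -
    obtain p where p: "p \<in> P" "z = \<theta> * p + (1 - \<theta>) * q0" using z1 unfolding S1_def by auto
    obtain q where q: "q \<in> Q" "z = (1 - \<theta>) * q + \<theta> * p0" using z2 unfolding S2_def by auto
    have "\<theta> * p \<le> \<theta> * p0" using p0(2)[OF p(1)] th by simp
    moreover have "(1 - \<theta>) * q0 \<le> (1 - \<theta>) * q" using q0(2)[OF q(1)] th by simp
    ultimately show "z = pt" using p q unfolding pt_def by linarith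
  qed
  have disj: "S1 \<inter> (S2 - {pt}) = {}" using eqpt by blast
  have "S1 \<subseteq> C" unfolding S1_def using sub q0(1) by blast
  moreover have "S2 \<subseteq> C" unfolding S2_def using sub[OF p0(1)] by (auto simp: add.commute)
  ultimately have "S1 \<union> (S2 - {pt}) \<subseteq> C" by blast
  then have "emeasure lborel (S1 \<union> (S2 - {pt})) \<le> emeasure lborel C"
    using C by (intro emeasure_mono) auto
  moreover have "emeasure lborel (S1 \<union> (S2 - {pt})) = emeasure lborel S1 + emeasure lborel (S2 - {pt})"
    using mS1 mS2 disj by (intro plus_emeasure[symmetric]) auto
  ultimately show ?thesis using e1 e2 e2' by simp
qed

lemma lborel_inner_compact:
  fixes P :: "real set"
  assumes P: "P \<in> sets borel" and fin: "emeasure lborel P < \<infinity>"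
  shows "emeasure lborel P = (SUP K \<in> {K. K \<subseteq> P \<and> compact K}. emeasure lborel K)"
proof -
  define M' where "M' = density lborel (indicator P)"
  have sM: "sets M' = sets borel" unfolding M'_def by simp
  have eM: "emeasure M' A = emeasure lborel (A \<inter> P)" if "A \<in> sets borel" for A
  proof -
    have "emeasure M' A = (\<integral>\<^sup>+ x. indicator P x * indicator A x \<partial>lborel)"
      unfolding M'_def using that P by (simp add: emeasure_density)
    also have "\<dots> = (\<integral>\<^sup>+ x. indicator (A \<inter> P) x \<partial>lborel)"
      by (intro nn_integral_cong) (simp add: indicator_inter_arith mult.commute)
    also have "\<dots> = emeasure lborel (A \<inter> P)" using that P by simp
    finally show ?thesis .
  qed
  have sp: "space M' = UNIV" unfolding M'_def by simp
  have "emeasure M' (space M') \<noteq> \<infinity>" using eM[of UNIV] fin sp by simp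
  then have "emeasure M' P = (SUP K \<in> {K. K \<subseteq> P \<and> compact K}. emeasure M' K)"
    using inner_regular[OF sM _ P] by blast
  moreover have "emeasure M' P = emeasure lborel P" using eM[OF P] by simp
  moreover have "emeasure M' K = emeasure lborel K" if "K \<in> {K. K \<subseteq> P \<and> compact K}" for K
    using that eM[of K] by (auto simp: borel_compact Int_absorb2)
  ultimately show ?thesis by (metis (no_types, lifting) SUP_cong)
qed

lemma bm_sets:
  fixes P Q C :: "real set" and \<theta> :: real
  assumes th: "0 < \<theta>" "\<theta> < 1" and PQ: "P \<in> sets borel" "Q \<in> sets borel" and ne: "P \<noteq> {}" "Q \<noteq> {}"
    and fin: "emeasure lborel P < \<infinity>" "emeasure lborel Q < \<infinity>"
    and C: "C \<in> sets borel" and sub: "\<And>p q. p \<in> P \<Longrightarrow> q \<in> Q \<Longrightarrow> \<theta> * p + (1 - \<theta>) * q \<in> C"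
  shows "ennreal \<theta> * emeasure lborel P + ennreal (1 - \<theta>) * emeasure lborel Q \<le> emeasure lborel C"
proof -
  obtain p0 where p0: "p0 \<in> P" using ne by auto
  obtain q0 where q0: "q0 \<in> Q" using ne by auto
  define I where "I = {K. K \<subseteq> P \<and> compact K}"
  define J where "J = {K. K \<subseteq> Q \<and> compact K}"
  have IJ: "I \<noteq> {}" "J \<noteq> {}" unfolding I_def J_def by auto
  have key: "ennreal \<theta> * emeasure lborel K + ennreal (1 - \<theta>) * emeasure lborel L \<le> emeasure lborel C"
    if "K \<in> I" "L \<in> J" for K L
  proof -
    have K: "insert p0 K \<subseteq> P" "compact (insert p0 K)" using that p0 unfolding I_def by auto
    have L: "insert q0 L \<subseteq> Q" "compact (insert q0 L)" using that q0 unfolding J_def by auto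
    have "ennreal \<theta> * emeasure lborel (insert p0 K) + ennreal (1 - \<theta>) * emeasure lborel (insert q0 L) \<le> emeasure lborel C"
      using K L by (intro bm_compact th C sub) auto
    moreover have "emeasure lborel K \<le> emeasure lborel (insert p0 K)"
      using K by (intro emeasure_mono) (auto simp: borel_compact)
    moreover have "emeasure lborel L \<le> emeasure lborel (insert q0 L)"
      using L by (intro emeasure_mono) (auto simp: borel_compact)
    ultimately show ?thesis
      by (meson add_mono dual_order.trans mult_left_mono zero_le)
  qed
  have "ennreal \<theta> * emeasure lborel P + ennreal (1 - \<theta>) * emeasure lborel Q
     = (SUP K\<in>I. ennreal \<theta> * emeasure lborel K) + (SUP L\<in>J. ennreal (1 - \<theta>) * emeasure lborel L)"
    unfolding I_def J_def
    by (simp add: lborel_inner_compact[OF PQ(1) fin(1)] lborel_inner_compact[OF PQ(2) fin(2)] SUP_mult_left_ennreal)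
  also have "\<dots> = (SUP K\<in>I. SUP L\<in>J. ennreal \<theta> * emeasure lborel K + ennreal (1 - \<theta>) * emeasure lborel L)"
    using IJ by (subst ennreal_SUP_add_left[symmetric]) (auto simp: ennreal_SUP_add_right)
  also have "\<dots> \<le> emeasure lborel C"
    using key by (intro SUP_least) auto
  finally show ?thesis .
qed

lemma layer_cake01:
  fixes f :: "real \<Rightarrow> real"
  assumes f[measurable]: "f \<in> borel_measurable borel"
  shows "(\<integral>\<^sup>+ r. indicator {0<..<1} r * emeasure lborel {x. r < f x} \<partial>lborel)
       = (\<integral>\<^sup>+ x. ennreal (min (max (f x) 0) 1) \<partial>lborel)"
proof -
  define g where "g = (\<lambda>(x::real, r::real). ennreal (if 0 < r \<and> r < min 1 (f x) then 1 else 0))"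
  have gm: "g \<in> borel_measurable (lborel \<Otimes>\<^sub>M lborel)"
    unfolding g_def by measurable
  have 1: "indicator {0<..<1} r * emeasure lborel {x. r < f x} = (\<integral>\<^sup>+ x. g (x, r) \<partial>lborel)" for r
  proof (cases "0 < r \<and> r < 1")
    case True
    then have "(\<integral>\<^sup>+ x. g (x, r) \<partial>lborel) = (\<integral>\<^sup>+ x. indicator {x. r < f x} x \<partial>lborel)"
      unfolding g_def by (intro nn_integral_cong) (auto simp: indicator_def)
    also have "\<dots> = emeasure lborel {x. r < f x}" by (intro nn_integral_indicator) measurable
    finally show ?thesis using True by simp
  next
    case False
    have "\<And>x. g (x, r) = 0" using False unfolding g_def by auto
    then have "(\<integral>\<^sup>+ x. g (x, r) \<partial>lborel) = (\<integral>\<^sup>+ x. 0 \<partial>lborel)" by simp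
    then show ?thesis using False by (simp add: indicator_def)
  qed
  have 2: "(\<integral>\<^sup>+ r. g (x, r) \<partial>lborel) = ennreal (min (max (f x) 0) 1)" for x
  proof (cases "f x > 0")
    case True
    have "(\<integral>\<^sup>+ r. g (x, r) \<partial>lborel) = (\<integral>\<^sup>+ r. indicator {0<..<min 1 (f x)} r \<partial>lborel)"
      unfolding g_def by (intro nn_integral_cong) (auto simp: indicator_def)
    also have "\<dots> = emeasure lborel {0<..<min 1 (f x)}" by simp
    also have "\<dots> = ennreal (min 1 (f x))" using True by simp
    finally show ?thesis using True by (simp add: min.commute)
  next
    case False
    have "\<And>r. g (x, r) = 0" using False unfolding g_def by auto
    then have "(\<integral>\<^sup>+ r. g (x, r) \<partial>lborel) = (\<integral>\<^sup>+ r. 0 \<partial>lborel)" by simp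
    then show ?thesis using False by simp
  qed
  have "(\<integral>\<^sup>+ r. indicator {0<..<1} r * emeasure lborel {x. r < f x} \<partial>lborel)
      = (\<integral>\<^sup>+ r. \<integral>\<^sup>+ x. g (x, r) \<partial>lborel \<partial>lborel)"
    using 1 by simp
  also have "\<dots> = (\<integral>\<^sup>+ x. \<integral>\<^sup>+ r. g (x, r) \<partial>lborel \<partial>lborel)"
    using lborel_pair.Fubini'[of "\<lambda>x r. g (x, r)"] gm by simp
  also have "\<dots> = (\<integral>\<^sup>+ x. ennreal (min (max (f x) 0) 1) \<partial>lborel)"
    using 2 by simp
  finally show ?thesis .
qed

lemma amgm_powr:
  fixes a b \<theta> :: real
  assumes "0 \<le> a" "0 \<le> b" "0 < \<theta>" "\<theta> < 1"
  shows "a powr \<theta> * b powr (1 - \<theta>) \<le> \<theta> * a + (1 - \<theta>) * b"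
proof (cases "a = 0 \<or> b = 0")
  case True then show ?thesis using assms by auto
next
  case False then show ?thesis using Youngs_inequality_0[of \<theta> "1 - \<theta>" a b] assms by auto
qed

lemma level_finite:
  fixes f :: "real \<Rightarrow> real"
  assumes f[measurable]: "f \<in> borel_measurable borel" and int: "integrable lborel f"
    and nn: "\<And>x. 0 \<le> f x" and r: "0 < r"
  shows "emeasure lborel {x. r < f x} < \<infinity>"
proof -
  have "ennreal r * emeasure lborel {x. r < f x} = (\<integral>\<^sup>+ x. ennreal r * indicator {x. r < f x} x \<partial>lborel)"
    by (subst nn_integral_cmult_indicator) auto
  also have "\<dots> \<le> (\<integral>\<^sup>+ x. ennreal (f x) \<partial>lborel)"
    by (intro nn_integral_mono) (auto simp: indicator_def intro!: ennreal_leI)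
  also have "\<dots> < \<infinity>" using int by (simp add: integrable_iff_bounded nn)
  finally have "ennreal r * emeasure lborel {x. r < f x} < \<infinity>" .
  then show ?thesis using r by (auto simp: ennreal_mult_less_top)
qed

lemma level_meas:
  fixes f :: "real \<Rightarrow> real"
  assumes f[measurable]: "f \<in> borel_measurable borel"
  shows "(\<lambda>r. emeasure lborel {x. r < f x}) \<in> borel_measurable borel"
proof -
  have "(\<lambda>r. emeasure lborel {x. r < f x}) = (\<lambda>r. \<integral>\<^sup>+ x. ennreal (if r < f x then 1 else 0) \<partial>lborel)"
  proof
    fix r
    have "(\<integral>\<^sup>+ x. ennreal (if r < f x then 1 else 0) \<partial>lborel) = (\<integral>\<^sup>+ x. indicator {x. r < f x} x \<partial>lborel)"
      by (intro nn_integral_cong) (auto simp: indicator_def)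
    also have "\<dots> = emeasure lborel {x. r < f x}" by (intro nn_integral_indicator) measurable
    finally show "emeasure lborel {x. r < f x} = (\<integral>\<^sup>+ x. ennreal (if r < f x then 1 else 0) \<partial>lborel)" ..
  qed
  also have "\<dots> \<in> borel_measurable borel" by measurable
  finally show ?thesis .
qed

lemma pl_1d_normalized:
  fixes f g h :: "real \<Rightarrow> real" and \<theta> :: real
  assumes th: "0 < \<theta>" "\<theta> < 1"
    and [measurable]: "f \<in> borel_measurable borel" "g \<in> borel_measurable borel" "h \<in> borel_measurable borel"
    and f01: "\<And>x. 0 \<le> f x \<and> f x \<le> 1" and g01: "\<And>x. 0 \<le> g x \<and> g x \<le> 1" and hnn: "\<And>x. 0 \<le> h x"
    and fs: "\<And>r. 0 < r \<Longrightarrow> r < 1 \<Longrightarrow> \<exists>x. r < f x"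
    and gs: "\<And>r. 0 < r \<Longrightarrow> r < 1 \<Longrightarrow> \<exists>x. r < g x"
    and int: "integrable lborel f" "integrable lborel g" "integrable lborel h"
    and cond: "\<And>x y. f x powr \<theta> * g y powr (1 - \<theta>) \<le> h (\<theta> * x + (1 - \<theta>) * y)"
  shows "\<theta> * (\<integral>x. f x \<partial>lborel) + (1 - \<theta>) * (\<integral>x. g x \<partial>lborel) \<le> (\<integral>x. h x \<partial>lborel)"
proof -
  have lev: "ennreal \<theta> * emeasure lborel {x. r < f x} + ennreal (1 - \<theta>) * emeasure lborel {x. r < g x}
      \<le> emeasure lborel {x. r < h x}" if r: "0 < r" "r < 1" for r
  proof (rule bm_sets[OF th])
    show "{x. r < f x} \<noteq> {}" "{x. r < g x} \<noteq> {}" using fs[OF r] gs[OF r] by auto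
    show "emeasure lborel {x. r < f x} < \<infinity>" "emeasure lborel {x. r < g x} < \<infinity>"
      using level_finite[of f r] level_finite[of g r] int f01 g01 r by auto
    fix p q assume p: "p \<in> {x. r < f x}" and q: "q \<in> {x. r < g x}"
    have "r = r powr \<theta> * r powr (1 - \<theta>)" using r by (simp flip: powr_add)
    also have "\<dots> < f p powr \<theta> * g q powr (1 - \<theta>)"
      using p q r th by (intro mult_strict_mono powr_less_mono2) auto
    also have "\<dots> \<le> h (\<theta> * p + (1 - \<theta>) * q)" by (rule cond)
    finally show "\<theta> * p + (1 - \<theta>) * q \<in> {x. r < h x}" by simp
  qed auto
  have "ennreal \<theta> * (\<integral>\<^sup>+ x. ennreal (f x) \<partial>lborel) + ennreal (1 - \<theta>) * (\<integral>\<^sup>+ x. ennreal (g x) \<partial>lborel)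
      = ennreal \<theta> * (\<integral>\<^sup>+ r. indicator {0<..<1} r * emeasure lborel {x. r < f x} \<partial>lborel)
        + ennreal (1 - \<theta>) * (\<integral>\<^sup>+ r. indicator {0<..<1} r * emeasure lborel {x. r < g x} \<partial>lborel)"
    using f01 g01 by (simp add: layer_cake01)
  also have "\<dots> = (\<integral>\<^sup>+ r. indicator {0<..<1} r * (ennreal \<theta> * emeasure lborel {x. r < f x}
        + ennreal (1 - \<theta>) * emeasure lborel {x. r < g x}) \<partial>lborel)"
  proof -
    have [measurable]: "(\<lambda>r. emeasure lborel {x. r < f x}) \<in> borel_measurable borel"
      "(\<lambda>r. emeasure lborel {x. r < g x}) \<in> borel_measurable borel"
      using level_meas[of f] level_meas[of g] by auto
    have "(\<integral>\<^sup>+ r. indicator {0<..<1} r * (ennreal \<theta> * emeasure lborel {x. r < f x}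
        + ennreal (1 - \<theta>) * emeasure lborel {x. r < g x}) \<partial>lborel)
      = (\<integral>\<^sup>+ r. ennreal \<theta> * (indicator {0<..<1} r * emeasure lborel {x. r < f x})
        + ennreal (1 - \<theta>) * (indicator {0<..<1} r * emeasure lborel {x. r < g x}) \<partial>lborel)"
      by (intro nn_integral_cong) (simp add: algebra_simps)
    also have "\<dots> = (\<integral>\<^sup>+ r. ennreal \<theta> * (indicator {0<..<1} r * emeasure lborel {x. r < f x}) \<partial>lborel)
        + (\<integral>\<^sup>+ r. ennreal (1 - \<theta>) * (indicator {0<..<1} r * emeasure lborel {x. r < g x}) \<partial>lborel)"
      by (intro nn_integral_add) auto
    also have "\<dots> = ennreal \<theta> * (\<integral>\<^sup>+ r. indicator {0<..<1} r * emeasure lborel {x. r < f x} \<partial>lborel)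
        + ennreal (1 - \<theta>) * (\<integral>\<^sup>+ r. indicator {0<..<1} r * emeasure lborel {x. r < g x} \<partial>lborel)"
      by (simp add: nn_integral_cmult)
    finally show ?thesis by simp
  qed
  also have "\<dots> \<le> (\<integral>\<^sup>+ r. indicator {0<..<1} r * emeasure lborel {x. r < h x} \<partial>lborel)"
    using lev by (intro nn_integral_mono) (auto simp: indicator_def)
  also have "\<dots> = (\<integral>\<^sup>+ x. ennreal (min (max (h x) 0) 1) \<partial>lborel)"
    by (simp add: layer_cake01)
  also have "\<dots> \<le> (\<integral>\<^sup>+ x. ennreal (h x) \<partial>lborel)"
    using hnn by (intro nn_integral_mono) auto
  finally have *: "ennreal \<theta> * (\<integral>\<^sup>+ x. ennreal (f x) \<partial>lborel) + ennreal (1 - \<theta>) * (\<integral>\<^sup>+ x. ennreal (g x) \<partial>lborel)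
      \<le> (\<integral>\<^sup>+ x. ennreal (h x) \<partial>lborel)" .
  have e: "(\<integral>\<^sup>+ x. ennreal (f x) \<partial>lborel) = ennreal (\<integral>x. f x \<partial>lborel)"
          "(\<integral>\<^sup>+ x. ennreal (g x) \<partial>lborel) = ennreal (\<integral>x. g x \<partial>lborel)"
          "(\<integral>\<^sup>+ x. ennreal (h x) \<partial>lborel) = ennreal (\<integral>x. h x \<partial>lborel)"
    using int f01 g01 hnn by (auto intro!: nn_integral_eq_integral)
  have nn: "0 \<le> (\<integral>x. f x \<partial>lborel)" "0 \<le> (\<integral>x. g x \<partial>lborel)" "0 \<le> (\<integral>x. h x \<partial>lborel)"
    using f01 g01 hnn by (auto intro!: integral_nonneg_AE)
  from * show ?thesis unfolding e using th nn
    by (simp flip: ennreal_mult ennreal_plus add: ennreal_le_iff2 ennreal_le_iff) linarith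
qed

lemma sup_facts:
  fixes f :: "real \<Rightarrow> real"
  assumes f01: "\<And>x. 0 \<le> f x \<and> f x \<le> 1"
  shows "\<And>x. f x \<le> Sup (range f)" "0 \<le> Sup (range f)" "Sup (range f) \<le> 1"
    "\<And>r. r < Sup (range f) \<Longrightarrow> \<exists>x. r < f x"
proof -
  have bdd: "bdd_above (range f)" by (rule bdd_aboveI[where M=1]) (use f01 in auto)
  show fx: "\<And>x. f x \<le> Sup (range f)" using bdd by (auto intro: cSUP_upper)
  show "0 \<le> Sup (range f)" using fx[of 0] f01[of 0] by linarith
  show "Sup (range f) \<le> 1" using f01 by (auto intro: cSUP_least)
  show "\<And>r. r < Sup (range f) \<Longrightarrow> \<exists>x. r < f x" using bdd by (simp add: less_cSUP_iff)
qed

lemma pl_1d: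
  fixes f g h :: "real \<Rightarrow> real" and \<theta> :: real
  assumes th: "0 < \<theta>" "\<theta> < 1"
    and mf[measurable]: "f \<in> borel_measurable borel" "g \<in> borel_measurable borel" "h \<in> borel_measurable borel"
    and f01: "\<And>x. 0 \<le> f x \<and> f x \<le> 1" and g01: "\<And>x. 0 \<le> g x \<and> g x \<le> 1" and hnn: "\<And>x. 0 \<le> h x"
    and int: "integrable lborel f" "integrable lborel g" "integrable lborel h"
    and cond: "\<And>x y. f x powr \<theta> * g y powr (1 - \<theta>) \<le> h (\<theta> * x + (1 - \<theta>) * y)"
  shows "(\<integral>x. f x \<partial>lborel) powr \<theta> * (\<integral>x. g x \<partial>lborel) powr (1 - \<theta>) \<le> (\<integral>x. h x \<partial>lborel)"
proof -
  define Mf where "Mf = Sup (range f)"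
  define Mg where "Mg = Sup (range g)"
  have F: "\<And>x. f x \<le> Mf" "0 \<le> Mf" "Mf \<le> 1" "\<And>r. r < Mf \<Longrightarrow> \<exists>x. r < f x"
    unfolding Mf_def using sup_facts[OF f01] by auto
  have G: "\<And>x. g x \<le> Mg" "0 \<le> Mg" "Mg \<le> 1" "\<And>r. r < Mg \<Longrightarrow> \<exists>x. r < g x"
    unfolding Mg_def using sup_facts[OF g01] by auto
  have hint: "0 \<le> (\<integral>x. h x \<partial>lborel)" using hnn by (auto intro!: integral_nonneg_AE)
  show ?thesis
  proof (cases "Mf = 0 \<or> Mg = 0")
    case True
    then have "(\<forall>x. f x = 0) \<or> (\<forall>x. g x = 0)" using F(1) G(1) f01 g01 by (metis order_antisym)
    then have "(\<integral>x. f x \<partial>lborel) = 0 \<or> (\<integral>x. g x \<partial>lborel) = 0" by auto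
    then show ?thesis using hint th by auto
  next
    case False
    then have pos: "0 < Mf" "0 < Mg" using F(2) G(2) by auto
    define c where "c = Mf powr \<theta> * Mg powr (1 - \<theta>)"
    have c: "0 < c" unfolding c_def using pos by simp
    define f' where "f' = (\<lambda>x. f x / Mf)"
    define g' where "g' = (\<lambda>x. g x / Mg)"
    define h' where "h' = (\<lambda>x. h x / c)"
    have "\<theta> * (\<integral>x. f' x \<partial>lborel) + (1 - \<theta>) * (\<integral>x. g' x \<partial>lborel) \<le> (\<integral>x. h' x \<partial>lborel)"
    proof (rule pl_1d_normalized[OF th])
      show "f' \<in> borel_measurable borel" "g' \<in> borel_measurable borel" "h' \<in> borel_measurable borel"
        unfolding f'_def g'_def h'_def by measurable
      show "0 \<le> f' x \<and> f' x \<le> 1" for x unfolding f'_def using pos F(1)[of x] f01[of x] by auto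
      show "0 \<le> g' x \<and> g' x \<le> 1" for x unfolding g'_def using pos G(1)[of x] g01[of x] by auto
      show "0 \<le> h' x" for x unfolding h'_def using c hnn[of x] by auto
      show "\<exists>x. r < f' x" if "0 < r" "r < 1" for r
      proof -
        have "r * Mf < Mf" using that pos by simp
        then obtain x where "r * Mf < f x" using F(4) by blast
        then show ?thesis unfolding f'_def using pos by (auto simp: field_simps)
      qed
      show "\<exists>x. r < g' x" if "0 < r" "r < 1" for r
      proof -
        have "r * Mg < Mg" using that pos by simp
        then obtain x where "r * Mg < g x" using G(4) by blast
        then show ?thesis unfolding g'_def using pos by (auto simp: field_simps)
      qed
      show "integrable lborel f'" "integrable lborel g'" "integrable lborel h'"
        unfolding f'_def g'_def h'_def using int by auto
      show "f' x powr \<theta> * g' y powr (1 - \<theta>) \<le> h' (\<theta> * x + (1 - \<theta>) * y)" for x y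
      proof -
        have "f' x powr \<theta> * g' y powr (1 - \<theta>) = (f x powr \<theta> * g y powr (1 - \<theta>)) / c"
          unfolding f'_def g'_def c_def by (simp add: powr_divide)
        also have "\<dots> \<le> h (\<theta> * x + (1 - \<theta>) * y) / c" using cond c by (simp add: divide_right_mono)
        finally show ?thesis unfolding h'_def .
      qed
    qed
    then have ineq: "\<theta> * ((\<integral>x. f x \<partial>lborel) / Mf) + (1 - \<theta>) * ((\<integral>x. g x \<partial>lborel) / Mg) \<le> (\<integral>x. h x \<partial>lborel) / c"
      unfolding f'_def g'_def h'_def by simp
    have A: "0 \<le> (\<integral>x. f x \<partial>lborel) / Mf" "0 \<le> (\<integral>x. g x \<partial>lborel) / Mg"
      using pos f01 g01 by (auto intro!: integral_nonneg_AE divide_nonneg_pos)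
    have "(\<integral>x. f x \<partial>lborel) powr \<theta> * (\<integral>x. g x \<partial>lborel) powr (1 - \<theta>)
        = (Mf * ((\<integral>x. f x \<partial>lborel) / Mf)) powr \<theta> * (Mg * ((\<integral>x. g x \<partial>lborel) / Mg)) powr (1 - \<theta>)"
      using pos by simp
    also have "\<dots> = c * (((\<integral>x. f x \<partial>lborel) / Mf) powr \<theta> * ((\<integral>x. g x \<partial>lborel) / Mg) powr (1 - \<theta>))"
      unfolding c_def powr_mult by (simp only: mult_ac)
    also have "\<dots> \<le> c * (\<theta> * ((\<integral>x. f x \<partial>lborel) / Mf) + (1 - \<theta>) * ((\<integral>x. g x \<partial>lborel) / Mg))"
      using c A th by (intro mult_left_mono amgm_powr) auto
    also have "\<dots> \<le> c * ((\<integral>x. h x \<partial>lborel) / c)" using c ineq by (intro mult_left_mono) auto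
    also have "\<dots> = (\<integral>x. h x \<partial>lborel)" using c by simp
    finally show ?thesis .
  qed
qed

lemma phi_interp:
  fixes x y \<theta> :: real
  shows "std_normal_density x powr \<theta> * std_normal_density y powr (1 - \<theta>)
       = std_normal_density (\<theta> * x + (1 - \<theta>) * y) * exp (- (\<theta> * (1 - \<theta>) * (x - y)\<^sup>2) / 2)"
proof -
  define C where "C = 1 / sqrt (2 * pi)"
  have C: "0 < C" unfolding C_def by simp
  have e: "exp a powr t = exp (t * a)" for a t :: real by (simp add: powr_def)
  have "std_normal_density x powr \<theta> * std_normal_density y powr (1 - \<theta>)
      = (C powr \<theta> * C powr (1 - \<theta>)) * (exp (\<theta> * (- x\<^sup>2 / 2)) * exp ((1 - \<theta>) * (- y\<^sup>2 / 2)))"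
    unfolding std_normal_density_def C_def[symmetric] powr_mult e by (simp add: mult_ac)
  also have "C powr \<theta> * C powr (1 - \<theta>) = C" using C by (simp flip: powr_add)
  also have "exp (\<theta> * (- x\<^sup>2 / 2)) * exp ((1 - \<theta>) * (- y\<^sup>2 / 2))
      = exp (- (\<theta> * x + (1 - \<theta>) * y)\<^sup>2 / 2) * exp (- (\<theta> * (1 - \<theta>) * (x - y)\<^sup>2) / 2)"
    unfolding exp_add[symmetric] by (rule arg_cong[where f=exp]) (simp add: power2_eq_square divide_simps, simp add: algebra_simps)
  finally show ?thesis unfolding std_normal_density_def C_def[symmetric] by (simp add: mult_ac)
qed

lemma phi_le1: "0 \<le> std_normal_density x \<and> std_normal_density x \<le> 1"
proof -
  have "exp (- x\<^sup>2 / 2) \<le> 1" by simp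
  moreover have "1 / sqrt (2 * pi) \<le> 1" using pi_gt3 by (simp add: divide_le_eq real_le_rsqrt)
  ultimately have "1 / sqrt (2 * pi) * exp (- x\<^sup>2 / 2) \<le> 1 * 1"
    by (intro mult_mono) auto
  then show ?thesis by (simp add: std_normal_density_def)
qed

lemma integral_std_gaussian:
  fixes f :: "real \<Rightarrow> real"
  assumes [measurable]: "f \<in> borel_measurable borel"
  shows "(\<integral>x. f x \<partial>std_gaussian) = (\<integral>x. std_normal_density x * f x \<partial>lborel)"
  unfolding std_gaussian_def by (subst integral_density) auto

lemma integrable_phi_bounded:
  fixes f :: "real \<Rightarrow> real"
  assumes [measurable]: "f \<in> borel_measurable borel" and b: "\<And>x. 0 \<le> f x \<and> f x \<le> 1"
  shows "integrable lborel (\<lambda>x. f x * std_normal_density x)"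
  by (rule Bochner_Integration.integrable_bound[OF integrable_normal_density[of 1 0]])
     (use b in \<open>auto intro!: mult_left_le_one_le simp: abs_mult\<close>)

lemma gpl_1d:
  fixes f g h :: "real \<Rightarrow> real" and \<theta> :: real
  assumes th: "0 < \<theta>" "\<theta> < 1"
    and mf[measurable]: "f \<in> borel_measurable borel" "g \<in> borel_measurable borel" "h \<in> borel_measurable borel"
    and f01: "\<And>x. 0 \<le> f x \<and> f x \<le> 1" and g01: "\<And>x. 0 \<le> g x \<and> g x \<le> 1" and h01: "\<And>x. 0 \<le> h x \<and> h x \<le> 1"
    and cond: "\<And>x y. f x powr \<theta> * g y powr (1 - \<theta>) * exp (- (\<theta> * (1 - \<theta>) * (x - y)\<^sup>2) / 2) \<le> h (\<theta> * x + (1 - \<theta>) * y)"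
  shows "(\<integral>x. f x \<partial>std_gaussian) powr \<theta> * (\<integral>x. g x \<partial>std_gaussian) powr (1 - \<theta>) \<le> (\<integral>x. h x \<partial>std_gaussian)"
proof -
  let ?p = std_normal_density
  have "(\<integral>x. f x * ?p x \<partial>lborel) powr \<theta> * (\<integral>x. g x * ?p x \<partial>lborel) powr (1 - \<theta>) \<le> (\<integral>x. h x * ?p x \<partial>lborel)"
  proof (rule pl_1d[OF th])
    show "0 \<le> f x * ?p x \<and> f x * ?p x \<le> 1" for x using f01[of x] phi_le1[of x] by (auto intro: mult_le_one)
    show "0 \<le> g x * ?p x \<and> g x * ?p x \<le> 1" for x using g01[of x] phi_le1[of x] by (auto intro: mult_le_one)
    show "0 \<le> h x * ?p x" for x using h01[of x] phi_le1[of x] by auto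
    show "integrable lborel (\<lambda>x. f x * ?p x)" "integrable lborel (\<lambda>x. g x * ?p x)" "integrable lborel (\<lambda>x. h x * ?p x)"
      using integrable_phi_bounded f01 g01 h01 by auto
    show "(f x * ?p x) powr \<theta> * (g y * ?p y) powr (1 - \<theta>) \<le> h (\<theta> * x + (1 - \<theta>) * y) * ?p (\<theta> * x + (1 - \<theta>) * y)" for x y
    proof -
      have "(f x * ?p x) powr \<theta> * (g y * ?p y) powr (1 - \<theta>)
          = (f x powr \<theta> * g y powr (1 - \<theta>)) * (?p x powr \<theta> * ?p y powr (1 - \<theta>))"
        by (simp add: powr_mult mult_ac)
      also have "\<dots> = (f x powr \<theta> * g y powr (1 - \<theta>) * exp (- (\<theta> * (1 - \<theta>) * (x - y)\<^sup>2) / 2)) * ?p (\<theta> * x + (1 - \<theta>) * y)"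
        by (simp add: phi_interp mult_ac)
      also have "\<dots> \<le> h (\<theta> * x + (1 - \<theta>) * y) * ?p (\<theta> * x + (1 - \<theta>) * y)"
        using cond phi_le1 by (intro mult_right_mono) auto
      finally show ?thesis .
    qed
  qed auto
  then show ?thesis by (simp add: integral_std_gaussian mult.commute)
qed

abbreviation GG :: "'i set \<Rightarrow> ('i \<Rightarrow> real) measure" where
  "GG I \<equiv> PiM I (\<lambda>_. std_gaussian)"

lemma prob_space_std_gaussian: "prob_space std_gaussian"
  unfolding std_gaussian_def using prob_space_normal_density[where \<mu>=0 and \<sigma>=1] by simp

lemma space_std_gaussian[simp]: "space std_gaussian = UNIV"
  unfolding std_gaussian_def by simp

lemma sets_std_gaussian[simp]: "sets std_gaussian = sets borel"
  unfolding std_gaussian_def by simp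

lemma measurable_std_gaussian_iff[simp]: "measurable std_gaussian N = measurable borel N"
  by (rule measurable_cong_sets) auto

lemma prob_space_GG: "prob_space (GG I)"
  by (rule prob_space_PiM) (rule prob_space_std_gaussian)

lemma psf_GG: "product_sigma_finite (\<lambda>_::'i. std_gaussian)"
  unfolding product_sigma_finite_def
  using prob_space_std_gaussian by (simp add: prob_space_imp_sigma_finite)

lemma integrable_01:
  assumes "prob_space M" "f \<in> borel_measurable M" "\<And>x. 0 \<le> f x \<and> f x \<le> (1::real)"
  shows "integrable M f"
proof -
  interpret prob_space M by fact
  show ?thesis using assms by (intro integrable_const_bound[where B=1]) auto
qed

lemma integral_01:
  assumes "prob_space M" "f \<in> borel_measurable M" "\<And>x. 0 \<le> f x \<and> f x \<le> (1::real)"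
  shows "0 \<le> (\<integral>x. f x \<partial>M) \<and> (\<integral>x. f x \<partial>M) \<le> 1"
proof -
  interpret prob_space M by fact
  have "(\<integral>x. f x \<partial>M) \<le> (\<integral>x. 1 \<partial>M)"
    using assms by (intro integral_mono integrable_01) auto
  then show ?thesis using assms by (auto intro!: integral_nonneg_AE simp: prob_space)
qed

lemma meas_upd:
  assumes "i \<notin> I"
  shows "(\<lambda>(s, x). x(i := s)) \<in> measurable (std_gaussian \<Otimes>\<^sub>M GG I) (GG (insert i I))"
  using measurable_fun_upd[of "insert i I" I i snd "std_gaussian \<Otimes>\<^sub>M GG I" "\<lambda>_. std_gaussian" fst]
  by (simp add: case_prod_beta')

lemma meas_upd_int:
  fixes f :: "('i \<Rightarrow> real) \<Rightarrow> real"
  assumes "i \<notin> I" and f[measurable]: "f \<in> borel_measurable (GG (insert i I))"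
  shows "(\<lambda>s. \<integral>x. f (x(i := s)) \<partial>GG I) \<in> borel_measurable std_gaussian"
proof -
  interpret sigma_finite_measure "GG I"
    by (rule prob_space_imp_sigma_finite[OF prob_space_GG])
  have "(\<lambda>(s, x). f (x(i := s))) \<in> borel_measurable (std_gaussian \<Otimes>\<^sub>M GG I)"
    using measurable_comp[OF meas_upd[OF assms(1)] f] by (simp add: comp_def case_prod_beta')
  then show ?thesis by (intro borel_measurable_lebesgue_integral) simp
qed

lemma meas_sec:
  fixes f :: "('i \<Rightarrow> real) \<Rightarrow> real"
  assumes "i \<notin> I" and f[measurable]: "f \<in> borel_measurable (GG (insert i I))"
  shows "(\<lambda>x. f (x(i := s))) \<in> borel_measurable (GG I)"
proof -
  have "(\<lambda>x. x(i := s)) \<in> measurable (GG I) (GG (insert i I))"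
    using measurable_fun_upd[of "insert i I" I i "\<lambda>x. x" "GG I" "\<lambda>_. std_gaussian" "\<lambda>_. s"] by simp
  from measurable_comp[OF this f] show ?thesis by (simp add: comp_def)
qed

lemma integral_insert_rev:
  fixes f :: "('i \<Rightarrow> real) \<Rightarrow> real"
  assumes I: "finite I" "i \<notin> I" and f[measurable]: "f \<in> borel_measurable (GG (insert i I))"
    and f01: "\<And>x. 0 \<le> f x \<and> f x \<le> 1"
  shows "(\<integral>x. f x \<partial>GG (insert i I)) = (\<integral>s. (\<integral>x. f (x(i := s)) \<partial>GG I) \<partial>std_gaussian)"
proof -
  have "ennreal (\<integral>x. f x \<partial>GG (insert i I)) = (\<integral>\<^sup>+x. ennreal (f x) \<partial>GG (insert i I))"
    using f01 by (intro nn_integral_eq_integral[symmetric] integrable_01 prob_space_GG) auto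
  also have "\<dots> = (\<integral>\<^sup>+s. (\<integral>\<^sup>+x. ennreal (f (x(i := s))) \<partial>GG I) \<partial>std_gaussian)"
    using product_sigma_finite.product_nn_integral_insert_rev[OF psf_GG I, of "\<lambda>x. ennreal (f x)"] by simp
  also have "\<dots> = (\<integral>\<^sup>+s. ennreal (\<integral>x. f (x(i := s)) \<partial>GG I) \<partial>std_gaussian)"
    using f01 meas_sec[OF I(2) f]
    by (intro nn_integral_cong nn_integral_eq_integral integrable_01 prob_space_GG) auto
  also have "\<dots> = ennreal (\<integral>s. (\<integral>x. f (x(i := s)) \<partial>GG I) \<partial>std_gaussian)"
    using f01 meas_upd_int[OF I(2) f] meas_sec[OF I(2) f] integral_01[OF prob_space_GG meas_sec[OF I(2) f]]
    by (intro nn_integral_eq_integral integrable_01 prob_space_std_gaussian) auto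
  finally show ?thesis
    using f01 meas_upd_int[OF I(2) f] meas_sec[OF I(2) f] integral_01[OF prob_space_GG meas_sec[OF I(2) f]]
      integral_01[OF prob_space_GG f]
    by (subst (asm) ennreal_inj) (auto intro!: integral_nonneg_AE)
qed

lemma space_GG_empty: "space (GG {}) = {\<lambda>_. undefined}"
  by (simp add: space_PiM)

lemma integral_GG_empty:
  fixes f :: "('i \<Rightarrow> real) \<Rightarrow> real"
  shows "(\<integral>x. f x \<partial>GG {}) = f (\<lambda>_. undefined)"
proof -
  have "(\<integral>x. f x \<partial>GG {}) = (\<integral>x. f (\<lambda>_. undefined) \<partial>(GG {} :: ('i \<Rightarrow> real) measure))"
    by (rule Bochner_Integration.integral_cong[OF refl]) (simp add: space_GG_empty)
  also have "\<dots> = f (\<lambda>_. undefined)"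
    using prob_space.prob_space[OF prob_space_GG, of "{} :: 'i set"] by simp
  finally show ?thesis .
qed

lemma powr01: "0 \<le> (a::real) \<Longrightarrow> a \<le> 1 \<Longrightarrow> 0 < t \<Longrightarrow> 0 \<le> a powr t \<and> a powr t \<le> 1"
  by (auto intro: powr_le1)

lemma gpl_n:
  fixes I :: "'i set" and \<theta> :: real
  assumes fin: "finite I" and th: "0 < \<theta>" "\<theta> < 1"
  shows "\<And>f g h. f \<in> borel_measurable (GG I) \<Longrightarrow> g \<in> borel_measurable (GG I) \<Longrightarrow> h \<in> borel_measurable (GG I) \<Longrightarrow>
    (\<And>x. 0 \<le> f x \<and> f x \<le> 1) \<Longrightarrow> (\<And>x. 0 \<le> g x \<and> g x \<le> 1) \<Longrightarrow> (\<And>x. 0 \<le> h x \<and> h x \<le> 1) \<Longrightarrow>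
    (\<And>x y. x \<in> space (GG I) \<Longrightarrow> y \<in> space (GG I) \<Longrightarrow>
       f x powr \<theta> * g y powr (1 - \<theta>) * exp (- (\<theta> * (1 - \<theta>) * (\<Sum>j\<in>I. (x j - y j)\<^sup>2)) / 2)
       \<le> h (\<lambda>j\<in>I. \<theta> * x j + (1 - \<theta>) * y j)) \<Longrightarrow>
    (\<integral>x. f x \<partial>GG I) powr \<theta> * (\<integral>x. g x \<partial>GG I) powr (1 - \<theta>) \<le> (\<integral>x. h x \<partial>GG I)"
  using fin
proof (induction I rule: finite_induct)
  case empty
  fix f g h :: "('i \<Rightarrow> real) \<Rightarrow> real"
  assume cond: "\<And>x y. x \<in> space (GG {}) \<Longrightarrow> y \<in> space (GG {}) \<Longrightarrow>
       f x powr \<theta> * g y powr (1 - \<theta>) * exp (- (\<theta> * (1 - \<theta>) * (\<Sum>j\<in>{}. (x j - y j)\<^sup>2)) / 2)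
       \<le> h (\<lambda>j\<in>{}. \<theta> * x j + (1 - \<theta>) * y j)"
  have re: "restrict F {} = (\<lambda>_. undefined)" for F :: "'i \<Rightarrow> real" by (auto simp: restrict_def)
  show "(\<integral>x. f x \<partial>GG {}) powr \<theta> * (\<integral>x. g x \<partial>GG {}) powr (1 - \<theta>) \<le> (\<integral>x. h x \<partial>GG {})"
    using cond[of "\<lambda>_. undefined" "\<lambda>_. undefined"] by (simp add: integral_GG_empty space_GG_empty re)
next
  case (insert i I)
  fix f g h :: "('i \<Rightarrow> real) \<Rightarrow> real"
  assume mf[measurable]: "f \<in> borel_measurable (GG (insert i I))" and mg[measurable]: "g \<in> borel_measurable (GG (insert i I))"
    and mh[measurable]: "h \<in> borel_measurable (GG (insert i I))"
    and f01: "\<And>x. 0 \<le> f x \<and> f x \<le> 1" and g01: "\<And>x. 0 \<le> g x \<and> g x \<le> 1" and h01: "\<And>x. 0 \<le> h x \<and> h x \<le> 1"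
    and cond: "\<And>x y. x \<in> space (GG (insert i I)) \<Longrightarrow> y \<in> space (GG (insert i I)) \<Longrightarrow>
       f x powr \<theta> * g y powr (1 - \<theta>) * exp (- (\<theta> * (1 - \<theta>) * (\<Sum>j\<in>insert i I. (x j - y j)\<^sup>2)) / 2)
       \<le> h (\<lambda>j\<in>insert i I. \<theta> * x j + (1 - \<theta>) * y j)"
  define F where "F = (\<lambda>s. \<integral>x. f (x(i := s)) \<partial>GG I)"
  define G where "G = (\<lambda>s. \<integral>x. g (x(i := s)) \<partial>GG I)"
  define H where "H = (\<lambda>s. \<integral>x. h (x(i := s)) \<partial>GG I)"
  have mF: "F \<in> borel_measurable borel" "G \<in> borel_measurable borel" "H \<in> borel_measurable borel"
    unfolding F_def G_def H_def using meas_upd_int[OF insert(2)] mf mg mh by auto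
  have F01: "0 \<le> F s \<and> F s \<le> 1" "0 \<le> G s \<and> G s \<le> 1" "0 \<le> H s \<and> H s \<le> 1" for s
    unfolding F_def G_def H_def
    using integral_01[OF prob_space_GG meas_sec[OF insert(2) mf]] integral_01[OF prob_space_GG meas_sec[OF insert(2) mg]]
      integral_01[OF prob_space_GG meas_sec[OF insert(2) mh]] f01 g01 h01 by auto
  have condF: "F s1 powr \<theta> * G s2 powr (1 - \<theta>) * exp (- (\<theta> * (1 - \<theta>) * (s1 - s2)\<^sup>2) / 2) \<le> H (\<theta> * s1 + (1 - \<theta>) * s2)"
    for s1 s2
  proof -
    define c1 where "c1 = exp (- (\<theta> * (1 - \<theta>) * (s1 - s2)\<^sup>2) / 2)"
    have c1: "0 < c1" unfolding c1_def by simp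
    define s where "s = \<theta> * s1 + (1 - \<theta>) * s2"
    define h1 where "h1 = (\<lambda>z. min 1 (h (z(i := s)) / c1))"
    have mh1: "h1 \<in> borel_measurable (GG I)" unfolding h1_def using meas_sec[OF insert(2) mh] by measurable
    have h1_01: "0 \<le> h1 x \<and> h1 x \<le> 1" for x unfolding h1_def using h01 c1 by auto
    have "F s1 powr \<theta> * G s2 powr (1 - \<theta>) \<le> (\<integral>x. h1 x \<partial>GG I)"
      unfolding F_def G_def
    proof (rule insert.IH[OF meas_sec[OF insert(2) mf] meas_sec[OF insert(2) mg] mh1 f01 g01 h1_01])
      fix x y assume x: "x \<in> space (GG I)" and y: "y \<in> space (GG I)"
      let ?S = "\<Sum>j\<in>I. (x j - y j)\<^sup>2"
      have X: "x(i := s1) \<in> space (GG (insert i I))" and Y: "y(i := s2) \<in> space (GG (insert i I))"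
        using x y by (auto simp: space_PiM PiE_iff extensional_def)
      have sum: "(\<Sum>j\<in>insert i I. ((x(i := s1)) j - (y(i := s2)) j)\<^sup>2) = (s1 - s2)\<^sup>2 + ?S"
        using insert(1,2) by (simp add: sum.insert, intro sum.cong) auto
      have res: "(\<lambda>j\<in>insert i I. \<theta> * (x(i := s1)) j + (1 - \<theta>) * (y(i := s2)) j) = (\<lambda>j\<in>I. \<theta> * x j + (1 - \<theta>) * y j)(i := s)"
        unfolding s_def using insert(2) by (intro ext) auto
      have ex: "exp (- (\<theta> * (1 - \<theta>) * ((s1 - s2)\<^sup>2 + ?S)) / 2) = c1 * exp (- (\<theta> * (1 - \<theta>) * ?S) / 2)"
        unfolding c1_def by (simp add: exp_add[symmetric] algebra_simps add_divide_distrib diff_divide_distrib)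
      have "f (x(i := s1)) powr \<theta> * g (y(i := s2)) powr (1 - \<theta>) * exp (- (\<theta> * (1 - \<theta>) * ?S) / 2) * c1
          \<le> h ((\<lambda>j\<in>I. \<theta> * x j + (1 - \<theta>) * y j)(i := s))"
        using cond[OF X Y] unfolding sum res ex by (simp add: mult_ac)
      then have A: "f (x(i := s1)) powr \<theta> * g (y(i := s2)) powr (1 - \<theta>) * exp (- (\<theta> * (1 - \<theta>) * ?S) / 2)
          \<le> h ((\<lambda>j\<in>I. \<theta> * x j + (1 - \<theta>) * y j)(i := s)) / c1"
        using c1 by (simp add: pos_le_divide_eq)
      have "f (x(i := s1)) powr \<theta> * g (y(i := s2)) powr (1 - \<theta>) * exp (- (\<theta> * (1 - \<theta>) * ?S) / 2) \<le> 1 * 1 * 1"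
      proof (intro mult_mono)
        have "0 \<le> ?S" by (intro sum_nonneg) auto
        then show "exp (- (\<theta> * (1 - \<theta>) * ?S) / 2) \<le> 1" using th by simp
      qed (use powr01[OF _ _ th(1)] powr01[of _ "1 - \<theta>"] f01 g01 th in auto)
      with A show "f (x(i := s1)) powr \<theta> * g (y(i := s2)) powr (1 - \<theta>) * exp (- (\<theta> * (1 - \<theta>) * ?S) / 2)
          \<le> h1 (\<lambda>j\<in>I. \<theta> * x j + (1 - \<theta>) * y j)"
        unfolding h1_def by simp
    qed
    also have "\<dots> \<le> (\<integral>x. h (x(i := s)) / c1 \<partial>GG I)"
      using h1_01 mh1 meas_sec[OF insert(2) mh] h01
      by (intro integral_mono integrable_01[OF prob_space_GG] integrable_divide_zero) (auto simp: h1_def)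
    also have "\<dots> = H s / c1" unfolding H_def by simp
    finally show ?thesis unfolding s_def[symmetric] c1_def[symmetric] using c1 by (simp add: pos_le_divide_eq)
  qed
  have "(\<integral>s. F s \<partial>std_gaussian) powr \<theta> * (\<integral>s. G s \<partial>std_gaussian) powr (1 - \<theta>) \<le> (\<integral>s. H s \<partial>std_gaussian)"
    by (rule gpl_1d[OF th mF F01 condF])
  then show "(\<integral>x. f x \<partial>GG (insert i I)) powr \<theta> * (\<integral>x. g x \<partial>GG (insert i I)) powr (1 - \<theta>) \<le> (\<integral>x. h x \<partial>GG (insert i I))"
    unfolding F_def G_def H_def
    by (simp add: integral_insert_rev[OF insert(1,2) mf f01] integral_insert_rev[OF insert(1,2) mg g01]
        integral_insert_rev[OF insert(1,2) mh h01])
qed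

lemma gauss_sets:
  fixes I :: "'i set" and A B :: "('i \<Rightarrow> real) set" and \<theta> D :: real
  assumes fin: "finite I" and th: "0 < \<theta>" "\<theta> < 1"
    and A: "A \<in> sets (GG I)" and B: "B \<in> sets (GG I)"
    and sep: "\<And>x y. x \<in> A \<Longrightarrow> y \<in> B \<Longrightarrow> D\<^sup>2 \<le> (\<Sum>j\<in>I. (x j - y j)\<^sup>2)"
  shows "measure (GG I) A powr \<theta> * measure (GG I) B powr (1 - \<theta>) \<le> exp (- (\<theta> * (1 - \<theta>) * D\<^sup>2) / 2)"
proof -
  interpret P: prob_space "GG I" by (rule prob_space_GG)
  let ?c = "exp (- (\<theta> * (1 - \<theta>) * D\<^sup>2) / 2)"
  have c1: "?c \<le> 1" using th by (simp add: mult_nonneg_nonneg)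
  have "(\<integral>x. indicator A x \<partial>GG I) powr \<theta> * (\<integral>x. indicator B x \<partial>GG I) powr (1 - \<theta>) \<le> (\<integral>x. ?c \<partial>GG I)"
  proof (rule gpl_n[OF fin th])
    show "indicator A \<in> borel_measurable (GG I)" "indicator B \<in> borel_measurable (GG I)"
      using A B by auto
    show "(\<lambda>x. ?c) \<in> borel_measurable (GG I)" by simp
    show "0 \<le> (indicator A x :: real) \<and> (indicator A x :: real) \<le> 1" for x by (auto simp: indicator_def)
    show "0 \<le> (indicator B x :: real) \<and> (indicator B x :: real) \<le> 1" for x by (auto simp: indicator_def)
    show "0 \<le> ?c \<and> ?c \<le> 1" using c1 by simp
    fix x y
    show "indicator A x powr \<theta> * indicator B y powr (1 - \<theta>) * exp (- (\<theta> * (1 - \<theta>) * (\<Sum>j\<in>I. (x j - y j)\<^sup>2)) / 2) \<le> ?c"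
    proof (cases "x \<in> A \<and> y \<in> B")
      case True
      have "\<theta> * (1 - \<theta>) * D\<^sup>2 \<le> \<theta> * (1 - \<theta>) * (\<Sum>j\<in>I. (x j - y j)\<^sup>2)"
        using sep True th by (intro mult_left_mono) auto
      then show ?thesis using True by simp
    next
      case False
      then show ?thesis using th by (auto simp: indicator_def)
    qed
  qed
  then show ?thesis using A B by (simp add: P.prob_space)
qed

lemma convex_grad_ineq:
  fixes f :: "real^'n \<Rightarrow> real" and grad :: "real^'n \<Rightarrow> real^'n"
  assumes der: "\<And>x. (f has_derivative (\<lambda>h. grad x \<bullet> h)) (at x)" and cvx: "convex_on UNIV f"
  shows "f x + grad x \<bullet> (y - x) \<le> f y"
proof -
  define \<phi> where "\<phi> = (\<lambda>\<tau>::real. f (x + \<tau> *\<^sub>R (y - x)))"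
  have cphi: "convex_on UNIV \<phi>"
  proof (rule convex_onI)
    fix t a b :: real assume t: "0 < t" "t < 1"
    have "x + ((1 - t) *\<^sub>R a + t *\<^sub>R b) *\<^sub>R (y - x) = (1 - t) *\<^sub>R (x + a *\<^sub>R (y - x)) + t *\<^sub>R (x + b *\<^sub>R (y - x))"
      by (simp add: algebra_simps)
    then show "\<phi> ((1 - t) *\<^sub>R a + t *\<^sub>R b) \<le> (1 - t) * \<phi> a + t * \<phi> b"
      unfolding \<phi>_def using convex_onD[OF cvx, of t] t by simp
  qed simp
  have d1: "((\<lambda>\<tau>::real. x + \<tau> *\<^sub>R (y - x)) has_derivative (\<lambda>h. h *\<^sub>R (y - x))) (at 0)"
    by (auto intro!: derivative_eq_intros)
  have "(\<phi> has_derivative (\<lambda>h. grad x \<bullet> (h *\<^sub>R (y - x)))) (at 0)"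
    unfolding \<phi>_def using has_derivative_compose[OF d1, of f "\<lambda>h. grad x \<bullet> h"] der[of x] by (simp add: o_def)
  moreover have "(\<lambda>h. grad x \<bullet> (h *\<^sub>R (y - x))) = (*) (grad x \<bullet> (y - x))"
    by (auto simp: inner_scaleR_right mult.commute)
  ultimately have "(\<phi> has_field_derivative (grad x \<bullet> (y - x))) (at 0 within UNIV)"
    by (simp add: has_field_derivative_def)
  from convex_on_imp_above_tangent[OF cphi _ _ _ this, of 1]
  have "\<phi> 1 - \<phi> 0 \<ge> (grad x \<bullet> (y - x)) * (1 - 0)" by simp
  then show ?thesis unfolding \<phi>_def by simp
qed

lemma final_arith:
  fixes p q s u \<theta> :: real
  assumes p: "0 < p" "p \<le> 1" and q: "0 < q" and s: "s = sqrt (2 * ln (2 / p))" and u: "0 < u"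
    and th: "\<theta> = u / (s + u)"
    and ineq: "p powr \<theta> * q powr (1 - \<theta>) \<le> exp (- (\<theta> * (1 - \<theta>) * (s + u)\<^sup>2) / 2)"
  shows "q \<le> exp (- u\<^sup>2 / 2)"
proof -
  have l2: "0 < ln (2 / p)" using p by simp
  have s0: "0 < s" using s l2 by simp
  have ss: "s\<^sup>2 = 2 * ln (2 / p)" using s l2 by simp
  have lnp: "ln p = ln 2 - s\<^sup>2 / 2" using ss p by (simp add: ln_div diff_divide_distrib)
  have lnp': "- (s\<^sup>2 / 2) \<le> ln p" using lnp by simp
  have th1: "1 - \<theta> = s / (s + u)" using th s0 u by (simp add: field_simps)
  have thp: "0 < \<theta>" "0 < 1 - \<theta>" using th th1 s0 u by auto
  have "ln (p powr \<theta> * q powr (1 - \<theta>)) \<le> - (\<theta> * (1 - \<theta>) * (s + u)\<^sup>2) / 2"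
  proof -
    have "ln (p powr \<theta> * q powr (1 - \<theta>)) \<le> ln (exp (- (\<theta> * (1 - \<theta>) * (s + u)\<^sup>2) / 2))"
      using ineq p q by (subst ln_le_cancel_iff) auto
    then show ?thesis by simp
  qed
  then have L: "\<theta> * ln p + (1 - \<theta>) * ln q \<le> - (\<theta> * (1 - \<theta>) * (s + u)\<^sup>2) / 2"
    using p q by (simp add: ln_mult ln_powr)
  have ne: "s + u \<noteq> 0" using s0 u by simp
  have "\<theta> * (1 - \<theta>) * (s + u)\<^sup>2 = u * s" unfolding th1 unfolding th using ne by (simp add: power2_eq_square)
  with L have L2: "(1 - \<theta>) * ln q \<le> - (u * s) / 2 - \<theta> * ln p" by simp
  have "\<theta> * (- (s\<^sup>2 / 2)) \<le> \<theta> * ln p" using lnp' thp by (intro mult_left_mono) auto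
  then have "- \<theta> * ln p \<le> \<theta> * (s\<^sup>2 / 2)" by simp
  with L2 have "(1 - \<theta>) * ln q \<le> - (u * s) / 2 + \<theta> * (s\<^sup>2 / 2)" by simp
  also have "- (u * s) / 2 + \<theta> * (s\<^sup>2 / 2) = (1 - \<theta>) * (- u\<^sup>2 / 2)"
    unfolding th1 unfolding th using ne by (simp add: power2_eq_square divide_simps) (simp add: algebra_simps)
  finally have X: "(1 - \<theta>) * ln q \<le> (1 - \<theta>) * (- u\<^sup>2 / 2)" .
  have "ln q \<le> - u\<^sup>2 / 2" using mult_le_cancel_left_pos[OF thp(2)] X by blast
  then have "exp (ln q) \<le> exp (- u\<^sup>2 / 2)" by simp
  then show ?thesis using q by simp
qed

lemma meas_vec:
  fixes N :: "'n::finite \<Rightarrow> real measure"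
  assumes sN: "\<And>i. sets (N i) = sets borel"
  shows "(\<lambda>z. vec_lambda z) \<in> borel_measurable (PiM UNIV N)"
proof (subst borel_measurable_euclidean_space, intro ballI)
  fix b :: "real^'n" assume "b \<in> Basis"
  then obtain i where b: "b = axis i 1" by (auto simp: Basis_vec_def)
  have "(\<lambda>z. z i) \<in> measurable (PiM UNIV N) (N i)" by (rule measurable_component_singleton) simp
  then have "(\<lambda>z. z i) \<in> borel_measurable (PiM UNIV N)" using sN measurable_cong_sets by blast
  then show "(\<lambda>z. vec_lambda z \<bullet> b) \<in> borel_measurable (PiM UNIV N)"
    by (simp add: b inner_axis)
qed

lemma lip_meas:
  assumes "K-lipschitz_on UNIV (g :: real \<Rightarrow> real)"
  shows "g \<in> borel_measurable borel"
  using lipschitz_on_continuous_on[OF assms] by (rule borel_measurable_continuous_onI)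

lemma law_transfer:
  fixes M :: "'a measure" and X :: "'a \<Rightarrow> real^'n"
  assumes "distr M borel X \<in> lip_gauss_class_n K"
  obtains gg where "\<And>i. K-lipschitz_on UNIV (gg i)"
    "distr M borel X = distr (GG UNIV) borel (\<lambda>z. vec_lambda (\<lambda>i. gg i (z i)))"
proof -
  from assms obtain \<nu> where d: "distr M borel X = distr (PiM UNIV \<nu>) borel (\<lambda>x. vec_lambda x)"
    and \<nu>: "\<forall>i. \<nu> i \<in> lip_gauss_class K"
    unfolding lip_gauss_class_n_def by auto
  from \<nu> have "\<forall>i. \<exists>g. K-lipschitz_on UNIV g \<and> \<nu> i = distr std_gaussian borel g"
    unfolding lip_gauss_class_def by auto
  then have "\<exists>gg. \<forall>i. K-lipschitz_on UNIV (gg i) \<and> \<nu> i = distr std_gaussian borel (gg i)"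
    by (rule choice)
  then obtain gg where gg0: "\<forall>i. K-lipschitz_on UNIV (gg i) \<and> \<nu> i = distr std_gaussian borel (gg i)"
    by blast
  have gg: "\<And>i. K-lipschitz_on UNIV (gg i)" "\<And>i. \<nu> i = distr std_gaussian borel (gg i)"
    using gg0 by auto
  have mg: "gg i \<in> borel_measurable borel" for i using lip_meas[OF gg(1)] .
  have sn: "sets (\<nu> i) = sets borel" for i using gg(2)[of i] by simp
  have spn: "space (\<nu> i) = UNIV" for i using gg(2)[of i] by simp
  have pn: "prob_space (\<nu> i)" for i
    unfolding gg(2) using prob_space_std_gaussian mg by (intro prob_space.prob_space_distr) auto
  have psfn: "product_sigma_finite \<nu>"
    unfolding product_sigma_finite_def using pn by (simp add: prob_space_imp_sigma_finite)
  define Gm where "Gm = (\<lambda>(z::'n \<Rightarrow> real) i. gg i (z i))"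
  have mGm: "Gm \<in> measurable (GG UNIV) (PiM UNIV \<nu>)"
    unfolding Gm_def
  proof (rule measurable_PiM_single')
    fix i :: 'n
    have a: "(\<lambda>z. z i) \<in> measurable (GG UNIV) std_gaussian" by (rule measurable_component_singleton) simp
    have b: "gg i \<in> measurable std_gaussian (\<nu> i)"
      using mg measurable_cong_sets[of std_gaussian borel "\<nu> i" borel] sn[of i] by simp
    show "(\<lambda>z. gg i (z i)) \<in> measurable (GG UNIV) (\<nu> i)"
      using measurable_comp[OF a b] by (simp add: comp_def)
  qed (auto simp: spn)
  have eqPi: "distr (GG UNIV) (PiM UNIV \<nu>) Gm = PiM UNIV \<nu>"
  proof (rule product_sigma_finite.PiM_eqI[OF psfn])
    fix A assume A: "\<And>i. i \<in> (UNIV::'n set) \<Longrightarrow> A i \<in> sets (\<nu> i)"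
    have A': "gg i -` A i \<in> sets borel" for i using measurable_sets_borel[OF mg] A sn by auto
    have "Gm -` Pi\<^sub>E UNIV A \<inter> space (GG UNIV) = Pi\<^sub>E UNIV (\<lambda>i. gg i -` A i)"
      unfolding Gm_def by (auto simp: space_PiM PiE_iff)
    then have "emeasure (distr (GG UNIV) (PiM UNIV \<nu>) Gm) (Pi\<^sub>E UNIV A) = emeasure (GG UNIV) (Pi\<^sub>E UNIV (\<lambda>i. gg i -` A i))"
      using mGm A by (subst emeasure_distr) (auto intro!: sets_PiM_I_finite)
    also have "\<dots> = (\<Prod>i\<in>UNIV. emeasure std_gaussian (gg i -` A i))"
      using A' by (subst product_sigma_finite.emeasure_PiM[OF psf_GG]) auto
    also have "\<dots> = (\<Prod>i\<in>UNIV. emeasure (\<nu> i) (A i))"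
    proof (intro prod.cong refl)
      fix i
      show "emeasure std_gaussian (gg i -` A i) = emeasure (\<nu> i) (A i)"
        unfolding gg(2) using A[of i] sn mg by (subst emeasure_distr) auto
    qed
    finally show "emeasure (distr (GG UNIV) (PiM UNIV \<nu>) Gm) (Pi\<^sub>E UNIV A) = (\<Prod>i\<in>UNIV. emeasure (\<nu> i) (A i))" .
  qed simp_all
  have mv: "(\<lambda>x. vec_lambda x) \<in> borel_measurable (PiM UNIV \<nu>)" using meas_vec[of \<nu>] sn by blast
  have "distr M borel X = distr (distr (GG UNIV) (PiM UNIV \<nu>) Gm) borel (\<lambda>x. vec_lambda x)"
    using d eqPi by simp
  also have "\<dots> = distr (GG UNIV) borel ((\<lambda>x. vec_lambda x) \<circ> Gm)"
    using mv mGm by (rule distr_distr)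
  also have "(\<lambda>x. vec_lambda x) \<circ> Gm = (\<lambda>z. vec_lambda (\<lambda>i. gg i (z i)))"
    unfolding Gm_def by (simp add: comp_def)
  finally show ?thesis using gg(1) that by blast
qed

lemma meas_vec2:
  fixes F :: "'a \<Rightarrow> 'n::finite \<Rightarrow> real"
  assumes "\<And>i. (\<lambda>z. F z i) \<in> borel_measurable M"
  shows "(\<lambda>z. vec_lambda (F z)) \<in> borel_measurable M"
proof (subst borel_measurable_euclidean_space, intro ballI)
  fix b :: "real^'n" assume "b \<in> Basis"
  then obtain i where b: "b = axis i 1" by (auto simp: Basis_vec_def)
  show "(\<lambda>z. vec_lambda (F z) \<bullet> b) \<in> borel_measurable M"
    using assms[of i] by (simp add: b inner_axis)
qed

lemma norm_G_bound:
  fixes gg :: "'n::finite \<Rightarrow> real \<Rightarrow> real"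
  assumes lip: "\<And>i. K-lipschitz_on UNIV (gg i)"
  shows "norm (vec_lambda (\<lambda>i. gg i (w i)) - vec_lambda (\<lambda>i. gg i (z i))) \<le> K * sqrt (\<Sum>i\<in>UNIV. (z i - w i)\<^sup>2)"
proof -
  have K: "0 \<le> K" using lipschitz_on_nonneg[OF lip] .
  have "norm (vec_lambda (\<lambda>i. gg i (w i)) - vec_lambda (\<lambda>i. gg i (z i))) = sqrt (\<Sum>i\<in>UNIV. (gg i (w i) - gg i (z i))\<^sup>2)"
    by (simp add: norm_vec_def L2_set_def)
  also have "\<dots> \<le> sqrt (\<Sum>i\<in>UNIV. K\<^sup>2 * (z i - w i)\<^sup>2)"
  proof (intro real_sqrt_le_mono sum_mono)
    fix i
    have "\<bar>gg i (w i) - gg i (z i)\<bar> \<le> K * \<bar>w i - z i\<bar>"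
      using lipschitz_onD[OF lip[of i], of "w i" "z i"] by (simp add: dist_real_def)
    also have "\<dots> = \<bar>K * (z i - w i)\<bar>" using K by (simp add: abs_mult abs_minus_commute)
    finally have "(gg i (w i) - gg i (z i))\<^sup>2 \<le> (K * (z i - w i))\<^sup>2"
      by (simp add: abs_le_square_iff)
    then show "(gg i (w i) - gg i (z i))\<^sup>2 \<le> K\<^sup>2 * (z i - w i)\<^sup>2" by (simp add: power_mult_distrib)
  qed
  also have "\<dots> = K * sqrt (\<Sum>i\<in>UNIV. (z i - w i)\<^sup>2)"
    using K by (simp add: sum_distrib_left[symmetric] real_sqrt_mult)
  finally show ?thesis .
qed

theorem proposition3p4:
  fixes M :: "'a measure" and X :: "'a \<Rightarrow> real^'n"
    and f :: "real^'n \<Rightarrow> real" and grad_f :: "real^'n \<Rightarrow> real^'n"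
    and K a b t :: real
  assumes "prob_space M"
    and "X \<in> borel_measurable M"
    and "distr M borel X \<in> lip_gauss_class_n K"
    and "\<And>x. (f has_derivative (\<lambda>h. grad_f x \<bullet> h)) (at x)"
    and "continuous_on UNIV grad_f"
    and "convex_on UNIV f"
    and "b > 0"
    and "t \<ge> 0"
    and "measure M {\<omega>\<in>space M. f (X \<omega>) \<ge> a \<and> norm (grad_f (X \<omega>)) \<le> b} > 0"
  shows "let p = measure M {\<omega>\<in>space M. f (X \<omega>) \<ge> a \<and> norm (grad_f (X \<omega>)) \<le> b}
         in measure M {\<omega>\<in>space M. f (X \<omega>) \<le> a - K * b * sqrt (2 * ln (2 / p)) - t}
            \<le> 2 * exp (- t\<^sup>2 / (2 * b\<^sup>2 * K\<^sup>2))"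
proof -
  interpret P: prob_space M by fact
  note mX[measurable] = assms(2)
  note der = assms(4)
  have fc: "continuous_on UNIV f"
    using der by (intro has_derivative_continuous_on) auto
  have mf[measurable]: "f \<in> borel_measurable borel" using fc by (rule borel_measurable_continuous_onI)
  have mgr[measurable]: "grad_f \<in> borel_measurable borel" using assms(5) by (rule borel_measurable_continuous_onI)
  define p where "p = measure M {\<omega>\<in>space M. f (X \<omega>) \<ge> a \<and> norm (grad_f (X \<omega>)) \<le> b}"
  define s where "s = sqrt (2 * ln (2 / p))"
  define q where "q = measure M {\<omega>\<in>space M. f (X \<omega>) \<le> a - K * b * s - t}"
  have p0: "0 < p" using assms(9) unfolding p_def .
  have p1: "p \<le> 1" unfolding p_def by simp
  have q1: "q \<le> 1" unfolding q_def by simp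
  obtain gg where lip: "\<And>i. K-lipschitz_on UNIV (gg i)"
    and law: "distr M borel X = distr (GG UNIV) borel (\<lambda>z. vec_lambda (\<lambda>i. gg i (z i)))"
    using law_transfer[OF assms(3)] by blast
  have K0: "0 \<le> K" using lipschitz_on_nonneg[OF lip] .
  have goal: "q \<le> 2 * exp (- t\<^sup>2 / (2 * b\<^sup>2 * K\<^sup>2))"
  proof (cases "K = 0 \<or> t = 0")
    case True
    then have e: "2 * exp (- t\<^sup>2 / (2 * b\<^sup>2 * K\<^sup>2)) = 2" by auto
    show ?thesis using q1 e by linarith
  next
    case False
    then have Kp: "0 < K" and tp: "0 < t" using K0 assms(8) by auto
    define Gz where "Gz = (\<lambda>z::'n \<Rightarrow> real. vec_lambda (\<lambda>i. gg i (z i)))"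
    have mGz: "Gz \<in> borel_measurable (GG UNIV)"
      unfolding Gz_def
    proof (rule meas_vec2)
      fix i
      have a0: "(\<lambda>z::'n \<Rightarrow> real. z i) \<in> measurable (GG UNIV) std_gaussian"
        by (rule measurable_component_singleton) simp
      have eq: "measurable (GG (UNIV::'n set)) std_gaussian = borel_measurable (GG UNIV)"
        by (rule measurable_cong_sets) auto
      have a: "(\<lambda>z::'n \<Rightarrow> real. z i) \<in> borel_measurable (GG UNIV)"
        using a0 unfolding eq .
      have b: "gg i \<in> borel_measurable borel" by (rule lip_meas[OF lip])
      show "(\<lambda>z. gg i (z i)) \<in> borel_measurable (GG UNIV)"
        using measurable_comp[OF a b] by (simp add: comp_def)
    qed
    have spG: "space (GG UNIV) = UNIV" by (simp add: space_PiM)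
    have lawS: "measure M {\<omega>\<in>space M. X \<omega> \<in> S} = measure (GG UNIV) (Gz -` S \<inter> space (GG UNIV))"
      if S: "S \<in> sets borel" for S
    proof -
      have "measure M {\<omega>\<in>space M. X \<omega> \<in> S} = measure M (X -` S \<inter> space M)"
        by (intro arg_cong[where f="measure M"]) auto
      also have "\<dots> = measure (distr M borel X) S" using S by (simp add: measure_distr)
      also have "\<dots> = measure (distr (GG UNIV) borel Gz) S" unfolding law Gz_def ..
      also have "\<dots> = measure (GG UNIV) (Gz -` S \<inter> space (GG UNIV))" using S mGz by (simp add: measure_distr)
      finally show ?thesis .
    qed
    define SA where "SA = {x. a \<le> f x \<and> norm (grad_f x) \<le> b}"
    define SB where "SB = {x. f x \<le> a - K * b * s - t}"
    have SAm: "SA \<in> sets borel" unfolding SA_def by measurable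
    have SBm: "SB \<in> sets borel" unfolding SB_def by measurable
    define A where "A = Gz -` SA \<inter> space (GG UNIV)"
    define B where "B = Gz -` SB \<inter> space (GG UNIV)"
    have pA: "p = measure (GG UNIV) A"
      unfolding p_def A_def using lawS[OF SAm] by (simp add: SA_def)
    have qB: "q = measure (GG UNIV) B"
      unfolding q_def B_def using lawS[OF SBm] by (simp add: SB_def)
    have Am: "A \<in> sets (GG UNIV)" unfolding A_def using measurable_sets[OF mGz SAm] .
    have Bm: "B \<in> sets (GG UNIV)" unfolding B_def using measurable_sets[OF mGz SBm] .
    show ?thesis
    proof (cases "q = 0")
      case True then show ?thesis by simp
    next
      case False
      then have q0: "0 < q" unfolding q_def by (simp add: zero_less_measure_iff)
      have l2: "0 < ln (2 / p)" using p0 p1 by simp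
      have s0: "0 < s" unfolding s_def using l2 by simp
      define u where "u = t / (K * b)"
      have u0: "0 < u" unfolding u_def using tp Kp assms(7) by simp
      define \<theta> where "\<theta> = u / (s + u)"
      have th: "0 < \<theta>" "\<theta> < 1" unfolding \<theta>_def using s0 u0 by (auto simp: field_simps)
      have sep: "(s + u)\<^sup>2 \<le> (\<Sum>j\<in>UNIV. (z j - w j)\<^sup>2)" if z: "z \<in> A" and w: "w \<in> B" for z w
      proof -
        let ?R = "sqrt (\<Sum>j\<in>UNIV. (z j - w j)\<^sup>2)"
        have zA: "a \<le> f (Gz z)" "norm (grad_f (Gz z)) \<le> b" using z unfolding A_def SA_def by auto
        have wB: "f (Gz w) \<le> a - K * b * s - t" using w unfolding B_def SB_def by auto
        have "f (Gz z) + grad_f (Gz z) \<bullet> (Gz w - Gz z) \<le> f (Gz w)"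
          by (rule convex_grad_ineq[OF der assms(6)])
        moreover have "- (grad_f (Gz z) \<bullet> (Gz w - Gz z)) \<le> b * (K * ?R)"
        proof -
          have "- (grad_f (Gz z) \<bullet> (Gz w - Gz z)) \<le> norm (grad_f (Gz z)) * norm (Gz w - Gz z)"
            using Cauchy_Schwarz_ineq2[of "grad_f (Gz z)" "Gz w - Gz z"] by linarith
          also have "\<dots> \<le> b * (K * ?R)"
            using assms(7) zA(2) norm_G_bound[where gg=gg and K=K and w=w and z=z, OF lip] unfolding Gz_def
            by (intro mult_mono) auto
          finally show ?thesis .
        qed
        ultimately have "a - b * (K * ?R) \<le> a - K * b * s - t" using zA(1) wB by linarith
        then have "K * b * s + t \<le> K * b * ?R" by (simp add: algebra_simps)
        then have "(K * b) * (s + u) \<le> (K * b) * ?R"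
          unfolding u_def using Kp assms(7) by (simp add: algebra_simps)
        then have "s + u \<le> ?R" using Kp assms(7) by simp
        then have "(s + u)\<^sup>2 \<le> ?R\<^sup>2" using s0 u0 by (intro power_mono) auto
        also have "?R\<^sup>2 = (\<Sum>j\<in>UNIV. (z j - w j)\<^sup>2)" by (simp add: sum_nonneg)
        finally show ?thesis .
      qed
      have "measure (GG UNIV) A powr \<theta> * measure (GG UNIV) B powr (1 - \<theta>) \<le> exp (- (\<theta> * (1 - \<theta>) * (s + u)\<^sup>2) / 2)"
        by (rule gauss_sets[OF _ th Am Bm sep]) auto
      then have "p powr \<theta> * q powr (1 - \<theta>) \<le> exp (- (\<theta> * (1 - \<theta>) * (s + u)\<^sup>2) / 2)"
        unfolding pA qB .
      from final_arith[OF p0 p1 q0 s_def u0 \<theta>_def this]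
      have "q \<le> exp (- u\<^sup>2 / 2)" .
      also have "- u\<^sup>2 / 2 = - t\<^sup>2 / (2 * b\<^sup>2 * K\<^sup>2)"
        unfolding u_def using Kp assms(7) by (simp add: power_divide power_mult_distrib field_simps)
      finally have qe: "q \<le> exp (- t\<^sup>2 / (2 * b\<^sup>2 * K\<^sup>2))" .
      have "0 < exp (- t\<^sup>2 / (2 * b\<^sup>2 * K\<^sup>2))" by simp
      with qe show ?thesis by linarith
    qed
  qed
  then show ?thesis unfolding Let_def p_def[symmetric] s_def[symmetric] q_def[symmetric] .
qed

end
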